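(* Let $\ln_G:(0,\infty)\to\mathbb{R}$ be a continuous, strictly increasing, strictly concave function with $\ln_G(1)=0$. Put $G(t):=\ln_G(e^t)$ and $\chi(u,v):=G\big(G^{-1}(u)+G^{-1}(v)\big)$ (for $u,v$ in the range of $G$), so that $\ln_G(xy)=\chi(\ln_G x,\ln_G y)$ for all $x,y>0$. Fix $\alpha>0$, $\alpha\neq 1$, and for a probability distribution $(p_1,\dots,p_W)$ define $$Z_{G,\alpha}(p_1,\dots,p_W):=\frac{\ln_G\big(\sum_{i=1}^W p_i^{\alpha}\big)}{1-\alpha}.$$ Let $A$, $B$ be statistically independent systems with arbitrary probability distributions $\{p_i^A\}_{i=1}^{W_A}$, $\{p_j^B\}_{j=1}^{W_B}$, and let $A\cup B$ be the composed system with joint distribution $p^{A\cup B}_{ij}=p_i^Ap_j^B$. Then $$Z_{G,\alpha}(A\cup B)=\Phi\big(Z_{G,\alpha}(A),Z_{G,\alpha}(B)\big),\qquad \Phi(x,y):=\frac{1}{1-\alpha}\,\chi\big((1-\alpha)x,(1-\alpha)y\big),$$ and $\Phi$ satisfies (wherever defined) $\Phi(x,y)=\Phi(y,x)$, $\Phi(x,0)=x$, and $\Phi(\Phi(x,y),z)=\Phi(x,\Phi(y,z))$.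
   Context: $Z_{G,\alpha}(X)$ denotes the entropy evaluated on the probability distribution of system $X$. *)

theory Defs
  imports "HOL-Analysis.Analysis"
begin

definition strictly_concave_on :: "real set \<Rightarrow> (real \<Rightarrow> real) \<Rightarrow> bool" where
  "strictly_concave_on S f \<longleftrightarrow> convex S \<and>
     (\<forall>x\<in>S. \<forall>y\<in>S. \<forall>u. x \<noteq> y \<and> 0 < u \<and> u < 1 \<longrightarrow>
        f (u * x + (1 - u) * y) > u * f x + (1 - u) * f y)"

definition Gfun :: "(real \<Rightarrow> real) \<Rightarrow> real \<Rightarrow> real" where
  "Gfun lnG t = lnG (exp t)"

text \<open>chi(u,v) = G(G^{-1}(u) + G^{-1}(v)), meaningful for u, v in the range of G\<close>
definition chi :: "(real \<Rightarrow> real) \<Rightarrow> real \<Rightarrow> real \<Rightarrow> real" where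
  "chi lnG u v = Gfun lnG (inv (Gfun lnG) u + inv (Gfun lnG) v)"

definition Phi :: "(real \<Rightarrow> real) \<Rightarrow> real \<Rightarrow> real \<Rightarrow> real \<Rightarrow> real" where
  "Phi lnG \<alpha> x y = chi lnG ((1 - \<alpha>) * x) ((1 - \<alpha>) * y) / (1 - \<alpha>)"

definition Zent :: "(real \<Rightarrow> real) \<Rightarrow> real \<Rightarrow> 'a set \<Rightarrow> ('a \<Rightarrow> real) \<Rightarrow> real" where
  "Zent lnG \<alpha> I p = lnG (\<Sum>i\<in>I. p i powr \<alpha>) / (1 - \<alpha>)"

definition prob_dist :: "'a set \<Rightarrow> ('a \<Rightarrow> real) \<Rightarrow> bool" where
  "prob_dist I p \<longleftrightarrow> finite I \<and> I \<noteq> {} \<and> (\<forall>i\<in>I. 0 \<le> p i) \<and> (\<Sum>i\<in>I. p i) = 1"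

end

theory Submission
  imports Defs
begin


lemma Gfun_inj:
  assumes incr: "strict_mono_on {0<..} lnG"
  shows "inj (Gfun lnG)"
proof (rule injI)
  fix a b assume h: "Gfun lnG a = Gfun lnG b"
  show "a = b"
  proof (rule ccontr)
    assume "a \<noteq> b"
    then consider "a < b" | "b < a" by linarith
    then show False
    proof cases
      case 1 then have "lnG (exp a) < lnG (exp b)"
        using incr by (intro strict_mono_onD[OF incr]) auto
      then show False using h by (simp add: Gfun_def)
    next
      case 2 then have "lnG (exp b) < lnG (exp a)"
        using incr by (intro strict_mono_onD[OF incr]) auto
      then show False using h by (simp add: Gfun_def)
    qed
  qed
qed

lemma chi_G:
  assumes "inj (Gfun lnG)"
  shows "chi lnG (Gfun lnG a) (Gfun lnG b) = Gfun lnG (a + b)"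
  using assms by (simp add: chi_def)

lemma sum_pos_powr:
  assumes "prob_dist I p" "\<alpha> > 0"
  shows "(\<Sum>i\<in>I. p i powr \<alpha>) > 0"
proof -
  have f: "finite I" and nn: "\<forall>i\<in>I. 0 \<le> p i" and s: "(\<Sum>i\<in>I. p i) = 1"
    using assms(1) by (auto simp: prob_dist_def)
  obtain i where i: "i \<in> I" "p i \<noteq> 0"
    using s by (metis (mono_tags, lifting) sum.neutral zero_neq_one)
  have "p i powr \<alpha> > 0" using i nn by auto
  moreover have "p i powr \<alpha> \<le> (\<Sum>i\<in>I. p i powr \<alpha>)"
    by (rule member_le_sum) (use i f in auto)
  ultimately show ?thesis by linarith
qed

theorem mainTheorem4:
  fixes lnG :: "real \<Rightarrow> real" and \<alpha> :: real
    and IA :: "'a set" and pA :: "'a \<Rightarrow> real"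
    and IB :: "'b set" and pB :: "'b \<Rightarrow> real"
  assumes cont: "continuous_on {0<..} lnG"
    and incr: "strict_mono_on {0<..} lnG"
    and conc: "strictly_concave_on {0<..} lnG"
    and one: "lnG 1 = 0"
    and alpha_pos: "\<alpha> > 0" and alpha_ne: "\<alpha> \<noteq> 1"
    and distA: "prob_dist IA pA" and distB: "prob_dist IB pB"
  shows "Zent lnG \<alpha> (IA \<times> IB) (\<lambda>(i, j). pA i * pB j)
           = Phi lnG \<alpha> (Zent lnG \<alpha> IA pA) (Zent lnG \<alpha> IB pB)
       \<and> (\<forall>x y. (1 - \<alpha>) * x \<in> range (Gfun lnG) \<and> (1 - \<alpha>) * y \<in> range (Gfun lnG)
               \<longrightarrow> Phi lnG \<alpha> x y = Phi lnG \<alpha> y x)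
       \<and> (\<forall>x. (1 - \<alpha>) * x \<in> range (Gfun lnG) \<longrightarrow> Phi lnG \<alpha> x 0 = x)
       \<and> (\<forall>x y z. (1 - \<alpha>) * x \<in> range (Gfun lnG) \<and> (1 - \<alpha>) * y \<in> range (Gfun lnG)
                 \<and> (1 - \<alpha>) * z \<in> range (Gfun lnG)
               \<longrightarrow> Phi lnG \<alpha> (Phi lnG \<alpha> x y) z = Phi lnG \<alpha> x (Phi lnG \<alpha> y z))"
proof -
  have inj: "inj (Gfun lnG)" by (rule Gfun_inj[OF incr])
  have a1: "1 - \<alpha> \<noteq> 0" using alpha_ne by simp
  have G0: "Gfun lnG 0 = 0" using one by (simp add: Gfun_def)
  define SA where "SA = (\<Sum>i\<in>IA. pA i powr \<alpha>)"
  define SB where "SB = (\<Sum>j\<in>IB. pB j powr \<alpha>)"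
  have SA: "SA > 0" unfolding SA_def by (rule sum_pos_powr[OF distA alpha_pos])
  have SB: "SB > 0" unfolding SB_def by (rule sum_pos_powr[OF distB alpha_pos])
  have nA: "\<forall>i\<in>IA. 0 \<le> pA i" and fA: "finite IA" using distA by (auto simp: prob_dist_def)
  have nB: "\<forall>i\<in>IB. 0 \<le> pB i" and fB: "finite IB" using distB by (auto simp: prob_dist_def)
  have prod: "(\<Sum>x\<in>IA \<times> IB. (case x of (i, j) \<Rightarrow> pA i * pB j) powr \<alpha>) = SA * SB"
  proof -
    have "(\<Sum>x\<in>IA \<times> IB. (case x of (i, j) \<Rightarrow> pA i * pB j) powr \<alpha>)
        = (\<Sum>i\<in>IA. \<Sum>j\<in>IB. (pA i * pB j) powr \<alpha>)"
      by (simp add: sum.cartesian_product case_prod_unfold)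
    also have "\<dots> = (\<Sum>i\<in>IA. \<Sum>j\<in>IB. pA i powr \<alpha> * pB j powr \<alpha>)"
      using nA nB by (intro sum.cong refl) (simp add: powr_mult)
    also have "\<dots> = SA * SB" unfolding SA_def SB_def
      by (simp add: sum_product)
    finally show ?thesis .
  qed
  have ZA: "(1 - \<alpha>) * Zent lnG \<alpha> IA pA = Gfun lnG (ln SA)"
    using a1 SA by (simp add: Zent_def Gfun_def SA_def)
  have ZB: "(1 - \<alpha>) * Zent lnG \<alpha> IB pB = Gfun lnG (ln SB)"
    using a1 SB by (simp add: Zent_def Gfun_def SB_def)
  have P1: "Zent lnG \<alpha> (IA \<times> IB) (\<lambda>(i, j). pA i * pB j)
           = Phi lnG \<alpha> (Zent lnG \<alpha> IA pA) (Zent lnG \<alpha> IB pB)"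
    unfolding Phi_def ZA ZB chi_G[OF inj]
    using SA SB by (simp add: Zent_def prod Gfun_def exp_add)
  have rng: "(1 - \<alpha>) * Phi lnG \<alpha> x y = Gfun lnG (a + b)"
    if "(1 - \<alpha>) * x = Gfun lnG a" "(1 - \<alpha>) * y = Gfun lnG b" for x y a b
    using that a1 by (simp add: Phi_def chi_G[OF inj])
  have P2: "\<forall>x y. (1 - \<alpha>) * x \<in> range (Gfun lnG) \<and> (1 - \<alpha>) * y \<in> range (Gfun lnG)
               \<longrightarrow> Phi lnG \<alpha> x y = Phi lnG \<alpha> y x"
    by (simp add: Phi_def chi_def add.commute)
  have P3: "\<forall>x. (1 - \<alpha>) * x \<in> range (Gfun lnG) \<longrightarrow> Phi lnG \<alpha> x 0 = x"
  proof (intro allI impI)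
    fix x assume "(1 - \<alpha>) * x \<in> range (Gfun lnG)"
    then obtain a where a: "(1 - \<alpha>) * x = Gfun lnG a" by auto
    have "(1 - \<alpha>) * Phi lnG \<alpha> x 0 = Gfun lnG (a + 0)"
      by (rule rng[OF a]) (simp add: G0)
    then have "(1 - \<alpha>) * Phi lnG \<alpha> x 0 = (1 - \<alpha>) * x" using a by simp
    then show "Phi lnG \<alpha> x 0 = x" using a1 by simp
  qed
  have P4: "\<forall>x y z. (1 - \<alpha>) * x \<in> range (Gfun lnG) \<and> (1 - \<alpha>) * y \<in> range (Gfun lnG)
                 \<and> (1 - \<alpha>) * z \<in> range (Gfun lnG)
               \<longrightarrow> Phi lnG \<alpha> (Phi lnG \<alpha> x y) z = Phi lnG \<alpha> x (Phi lnG \<alpha> y z)"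
  proof (intro allI impI)
    fix x y z assume h: "(1 - \<alpha>) * x \<in> range (Gfun lnG) \<and> (1 - \<alpha>) * y \<in> range (Gfun lnG)
                 \<and> (1 - \<alpha>) * z \<in> range (Gfun lnG)"
    then obtain a b c where a: "(1 - \<alpha>) * x = Gfun lnG a" and b: "(1 - \<alpha>) * y = Gfun lnG b"
      and c: "(1 - \<alpha>) * z = Gfun lnG c" by blast
    have "(1 - \<alpha>) * Phi lnG \<alpha> (Phi lnG \<alpha> x y) z = Gfun lnG ((a + b) + c)"
      by (rule rng[OF rng[OF a b] c])
    moreover have "(1 - \<alpha>) * Phi lnG \<alpha> x (Phi lnG \<alpha> y z) = Gfun lnG (a + (b + c))"
      by (rule rng[OF a rng[OF b c]])
    ultimately have "(1 - \<alpha>) * Phi lnG \<alpha> (Phi lnG \<alpha> x y) z = (1 - \<alpha>) * Phi lnG \<alpha> x (Phi lnG \<alpha> y z)"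
      by (simp add: add.assoc)
    then show "Phi lnG \<alpha> (Phi lnG \<alpha> x y) z = Phi lnG \<alpha> x (Phi lnG \<alpha> y z)" using a1 by simp
  qed
  show ?thesis using P1 P2 P3 P4 by blast
qed

end
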